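(* Let $\mathscr{H}$ be a complex Hilbert space and let $B,C$ be Hilbert–Schmidt operators on $\mathscr{H}$. Then $$w_{(2,e)}^2(B,C)\geq\frac18\,|\mathrm{tr}((B+C)^2)+\mathrm{tr}((B-C)^2)+2\,\mathrm{tr}((B+C)(B-C))|+\frac18\left(\|B+C\|_2^2+\|B-C\|_2^2\right)+\frac14\,\mathrm{Re}\big(\mathrm{tr}((B+C)(B-C)^* )\big),$$ where $\mathrm{Re}(z)$ denotes the real part of $z\in\mathbb{C}$.
   Context: An operator $T$ on $\mathscr{H}$ is Hilbert–Schmidt if $\sum_i\|Te_i\|^2<\infty$ for some (equivalently every) orthonormal basis $\{e_i\}$; its Hilbert–Schmidt norm is $\|T\|_2=(\mathrm{tr}(T^*T))^{1/2}$. For an operator $T$, $\Re(T)=\frac12(T+T^* )$. The Hilbert–Schmidt Euclidean operator radius is $w_{(2,e)}(B,C)=\sup_{\lambda_1,\lambda_2\in\mathbb{C},\ |\lambda_1|^2+|\lambda_2|^2\leq1}\sup_{\theta\in\mathbb{R}}\|\Re(e^{i\theta}(\lambda_1B+\lambda_2C))\|_2$. *)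

theory Defs
  imports "HOL-Analysis.Analysis"
begin

class complex_vector = real_vector +
  fixes scaleC :: "complex \<Rightarrow> 'a \<Rightarrow> 'a" (infixr "*\<^sub>C" 75)
  assumes scaleC_add_right: "a *\<^sub>C (x + y) = a *\<^sub>C x + a *\<^sub>C y"
    and scaleC_add_left: "(a + b) *\<^sub>C x = a *\<^sub>C x + b *\<^sub>C x"
    and scaleC_scaleC: "a *\<^sub>C (b *\<^sub>C x) = (a * b) *\<^sub>C x"
    and scaleC_one: "1 *\<^sub>C x = x"
    and scaleR_scaleC: "scaleR r x = complex_of_real r *\<^sub>C x"

class complex_inner = complex_vector + real_normed_vector +
  fixes cinner :: "'a \<Rightarrow> 'a \<Rightarrow> complex"
  assumes cinner_commute: "cinner x y = cnj (cinner y x)"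
    and cinner_add_left: "cinner (x + y) z = cinner x z + cinner y z"
    and cinner_scaleC_left: "cinner (r *\<^sub>C x) y = cnj r * cinner x y"
    and cinner_ge_zero: "0 \<le> Re (cinner x x)"
    and cinner_eq_zero_iff: "cinner x x = 0 \<longleftrightarrow> x = 0"
    and norm_eq_sqrt_cinner: "norm x = sqrt (Re (cinner x x))"

text \<open>A complex Hilbert space is a type of sort complex_inner and complete_space.\<close>

definition bounded_clinear :: "('a::complex_inner \<Rightarrow> 'b::complex_inner) \<Rightarrow> bool" where
  "bounded_clinear T \<longleftrightarrow>
     (\<forall>x y. T (x + y) = T x + T y) \<and> (\<forall>c x. T (c *\<^sub>C x) = c *\<^sub>C T x) \<and>
     (\<exists>K. \<forall>x. norm (T x) \<le> norm x * K)"

definition adjoint :: "('a::complex_inner \<Rightarrow> 'a) \<Rightarrow> ('a \<Rightarrow> 'a)" where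
  "adjoint T = (SOME S. \<forall>x y. cinner (S x) y = cinner x (T y))"

text \<open>Orthonormal basis = maximal orthonormal set.\<close>
definition is_onb :: "'a::complex_inner set \<Rightarrow> bool" where
  "is_onb E \<longleftrightarrow> (\<forall>e\<in>E. cinner e e = 1) \<and>
     (\<forall>e\<in>E. \<forall>f\<in>E. e \<noteq> f \<longrightarrow> cinner e f = 0) \<and>
     (\<forall>x. (\<forall>e\<in>E. cinner e x = 0) \<longrightarrow> x = 0)"

definition hilbert_schmidt :: "('a::complex_inner \<Rightarrow> 'a) \<Rightarrow> bool" where
  "hilbert_schmidt T \<longleftrightarrow> bounded_clinear T \<and>
     (\<exists>E. is_onb E \<and> (\<lambda>e. (norm (T e))\<^sup>2) summable_on E)"

text \<open>Trace, computed with respect to a (fixed, arbitrary) orthonormal basis.\<close>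
definition trace :: "('a::complex_inner \<Rightarrow> 'a) \<Rightarrow> complex" where
  "trace T = infsum (\<lambda>e. cinner e (T e)) (SOME E. is_onb E)"

definition hs_norm :: "('a::complex_inner \<Rightarrow> 'a) \<Rightarrow> real" where
  "hs_norm T = sqrt (Re (trace (\<lambda>x. adjoint T (T x))))"

definition re_op :: "('a::complex_inner \<Rightarrow> 'a) \<Rightarrow> ('a \<Rightarrow> 'a)" where
  "re_op T = (\<lambda>x. (1/2) *\<^sub>C (T x + adjoint T x))"

definition w2e :: "('a::complex_inner \<Rightarrow> 'a) \<Rightarrow> ('a \<Rightarrow> 'a) \<Rightarrow> real" where
  "w2e B C = Sup {hs_norm (re_op (\<lambda>x. exp (\<i> * complex_of_real \<theta>) *\<^sub>C (l1 *\<^sub>C B x + l2 *\<^sub>C C x)))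
                  | l1 l2 \<theta>. (cmod l1)\<^sup>2 + (cmod l2)\<^sup>2 \<le> 1}"

end

theory Submission
  imports Defs
begin

lemma scaleC_zero_left[simp]: "0 *\<^sub>C (x::'a::complex_vector) = 0"
  by (metis scaleR_scaleC scale_zero_left of_real_0)

lemma scaleC_zero_right[simp]: "a *\<^sub>C (0::'a::complex_vector) = 0"
  by (metis add_cancel_right_right add.right_neutral scaleC_add_right)

lemma scaleC_minus_left: "(- a) *\<^sub>C (x::'a::complex_vector) = - (a *\<^sub>C x)"
  by (metis add.right_inverse add_eq_0_iff scaleC_add_left scaleC_zero_left)

lemma scaleC_minus_right: "a *\<^sub>C (- x::'a::complex_vector) = - (a *\<^sub>C x)"
  by (metis add.right_inverse add_eq_0_iff scaleC_add_right scaleC_zero_right)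

lemma scaleC_diff_right: "a *\<^sub>C (x - y::'a::complex_vector) = a *\<^sub>C x - a *\<^sub>C y"
  by (metis diff_conv_add_uminus scaleC_add_right scaleC_minus_right)

lemma scaleC_diff_left: "(a - b) *\<^sub>C (x::'a::complex_vector) = a *\<^sub>C x - b *\<^sub>C x"
  by (metis diff_conv_add_uminus scaleC_add_left scaleC_minus_left)

lemma scaleC_sum_right: "a *\<^sub>C (\<Sum>i\<in>F. f i) = (\<Sum>i\<in>F. a *\<^sub>C (f i::'a::complex_vector))"
  by (induction F rule: infinite_finite_induct) (auto simp: scaleC_add_right)

lemma of_real_scaleC: "complex_of_real r *\<^sub>C (x::'a::complex_vector) = r *\<^sub>R x"
  by (simp add: scaleR_scaleC)

lemma cinner_add_right: "cinner (x::'a::complex_inner) (y + z) = cinner x y + cinner x z"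
  by (metis cinner_add_left cinner_commute complex_cnj_add)

lemma cinner_scaleC_right: "cinner (x::'a::complex_inner) (r *\<^sub>C y) = r * cinner x y"
  by (metis cinner_commute cinner_scaleC_left complex_cnj_cnj complex_cnj_mult)

lemma cinner_zero_left[simp]: "cinner (0::'a::complex_inner) y = 0"
  by (metis cinner_scaleC_left complex_cnj_zero mult_zero_left scaleC_zero_left)

lemma cinner_zero_right[simp]: "cinner (x::'a::complex_inner) 0 = 0"
  by (metis cinner_commute cinner_zero_left complex_cnj_zero)

lemma cinner_minus_left: "cinner (- x::'a::complex_inner) y = - cinner x y"
  by (metis add_eq_0_iff cinner_add_left cinner_zero_left add.right_inverse)

lemma cinner_minus_right: "cinner (x::'a::complex_inner) (- y) = - cinner x y"
  by (metis add_eq_0_iff cinner_add_right cinner_zero_right add.right_inverse)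

lemma cinner_diff_left: "cinner (x - z::'a::complex_inner) y = cinner x y - cinner z y"
  using cinner_add_left[of x "-z" y] by (simp add: cinner_minus_left)

lemma cinner_diff_right: "cinner (x::'a::complex_inner) (y - z) = cinner x y - cinner x z"
  using cinner_add_right[of x y "-z"] by (simp add: cinner_minus_right)

lemma cinner_sum_left: "cinner (\<Sum>i\<in>F. f i) (y::'a::complex_inner) = (\<Sum>i\<in>F. cinner (f i) y)"
  by (induction F rule: infinite_finite_induct) (auto simp: cinner_add_left)

lemma cinner_sum_right: "cinner (y::'a::complex_inner) (\<Sum>i\<in>F. f i) = (\<Sum>i\<in>F. cinner y (f i))"
  by (induction F rule: infinite_finite_induct) (auto simp: cinner_add_right)

lemma cinner_scaleR_left: "cinner (r *\<^sub>R x::'a::complex_inner) y = complex_of_real r * cinner x y"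
  by (simp add: scaleR_scaleC cinner_scaleC_left)

lemma cinner_scaleR_right: "cinner (x::'a::complex_inner) (r *\<^sub>R y) = complex_of_real r * cinner x y"
  by (simp add: scaleR_scaleC cinner_scaleC_right)

lemma cnj_cinner: "cnj (cinner (x::'a::complex_inner) y) = cinner y x"
  by (metis cinner_commute)

lemma cinner_self: "cinner (x::'a::complex_inner) x = complex_of_real ((norm x)\<^sup>2)"
proof -
  have "Im (cinner x x) = Im (cnj (cinner x x))"
    by (subst cinner_commute) simp
  then have "Im (cinner x x) = 0" by simp
  moreover have "Re (cinner x x) = (norm x)\<^sup>2"
    using norm_eq_sqrt_cinner[of x] cinner_ge_zero[of x] by simp
  ultimately show ?thesis by (simp add: complex_eq_iff)
qed

lemma norm_sq_cinner: "(norm (x::'a::complex_inner))\<^sup>2 = Re (cinner x x)"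
  by (simp add: cinner_self)

lemma norm_scaleC: "norm (a *\<^sub>C (x::'a::complex_inner)) = cmod a * norm x"
proof -
  have "cinner (a *\<^sub>C x) (a *\<^sub>C x) = cnj a * a * cinner x x"
    by (simp add: cinner_scaleC_left cinner_scaleC_right algebra_simps)
  then have "(norm (a *\<^sub>C x))\<^sup>2 = Re (cnj a * a * cinner x x)"
    by (simp only: norm_sq_cinner)
  also have "cnj a * a = complex_of_real ((cmod a)\<^sup>2)"
    by (metis complex_norm_square mult.commute)
  also have "Re (complex_of_real ((cmod a)\<^sup>2) * cinner x x) = (cmod a * norm x)\<^sup>2"
    by (simp add: cinner_self power_mult_distrib)
  finally show ?thesis
    by (simp add: power2_eq_iff_nonneg)
qed

lemma cinner_add_add: "cinner (x + y::'a::complex_inner) (x + y) = cinner x x + cinner y y + cinner x y + cinner y x"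
  by (simp add: cinner_add_left cinner_add_right)

lemma norm_add_sq: "(norm (x + y::'a::complex_inner))\<^sup>2 = (norm x)\<^sup>2 + (norm y)\<^sup>2 + 2 * Re (cinner x y)"
proof -
  have "Re (cinner y x) = Re (cinner x y)" by (subst cinner_commute) simp
  then show ?thesis by (simp add: norm_sq_cinner cinner_add_add)
qed

lemma Re_cinner_le: "Re (cinner (x::'a::complex_inner) y) \<le> norm x * norm y"
proof -
  have "(norm (x + y))\<^sup>2 \<le> (norm x + norm y)\<^sup>2"
    by (simp add: norm_triangle_ineq power_mono)
  then show ?thesis by (simp add: norm_add_sq power2_sum)
qed

lemma cauchy_schwarz: "cmod (cinner (x::'a::complex_inner) y) \<le> norm x * norm y"
proof (cases "cinner x y = 0")
  case True then show ?thesis by simp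
next
  case False
  define c where "c = cinner x y"
  have c0: "cmod c \<noteq> 0" using False unfolding c_def by simp
  define w where "w = cnj c / complex_of_real (cmod c)"
  have cw: "cmod w = 1" unfolding w_def using c0 by (simp add: norm_divide)
  have cc: "cnj c * c = complex_of_real ((cmod c)\<^sup>2)"
    by (metis complex_norm_square mult.commute)
  have "w * c = (cnj c * c) / complex_of_real (cmod c)"
    unfolding w_def by simp
  also have "\<dots> = complex_of_real ((cmod c)\<^sup>2) / complex_of_real (cmod c)"
    by (simp only: cc)
  also have "\<dots> = complex_of_real (cmod c)"
    using c0 by (simp add: power2_eq_square)
  finally have wc: "w * c = complex_of_real (cmod c)" .
  have "cinner x (w *\<^sub>C y) = w * c" unfolding c_def by (rule cinner_scaleC_right)
  then have "cmod c = Re (cinner x (w *\<^sub>C y))"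
    using wc by simp
  also have "\<dots> \<le> norm x * norm (w *\<^sub>C y)" by (rule Re_cinner_le)
  also have "\<dots> = norm x * norm y" by (simp add: norm_scaleC cw)
  finally show ?thesis unfolding c_def .
qed

lemma bounded_linear_cinner_right: "bounded_linear (cinner (x::'a::complex_inner))"
proof (rule bounded_linear_intro[where K="norm x"])
  fix y z show "cinner x (y + z) = cinner x y + cinner x z" by (rule cinner_add_right)
next
  fix r y show "cinner x (r *\<^sub>R y) = r *\<^sub>R cinner x y"
    unfolding cinner_scaleR_right by (simp add: scaleR_conv_of_real)
next
  fix y show "norm (cinner x y) \<le> norm y * norm x"
    by (subst mult.commute) (rule cauchy_schwarz)
qed

lemma bounded_clinear_linear: "bounded_clinear T \<Longrightarrow> bounded_linear T"
  unfolding bounded_clinear_def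
  apply (elim conjE exE)
  apply (rule bounded_linear_intro)
  by (auto simp: scaleR_scaleC)

lemma onb_cinner_sum:
  assumes "is_onb E" "finite F" "F \<subseteq> E" "e \<in> F"
  shows "cinner e (\<Sum>f\<in>F. c f *\<^sub>C f) = c e"
proof -
  have "cinner e (\<Sum>f\<in>F. c f *\<^sub>C f) = (\<Sum>f\<in>F. c f * cinner e f)"
    by (simp add: cinner_sum_right cinner_scaleC_right)
  also have "\<dots> = (\<Sum>f\<in>F. if f = e then c f else 0)"
  proof (rule sum.cong)
    fix f assume "f \<in> F"
    then have "f \<in> E" "e \<in> E" using assms by auto
    then show "c f * cinner e f = (if f = e then c f else 0)"
      using assms(1) unfolding is_onb_def by auto
  qed simp
  also have "\<dots> = c e" using assms(2,4) by (simp add: sum.delta')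
  finally show ?thesis .
qed

lemma onb_norm_sum:
  assumes "is_onb E" "finite F" "F \<subseteq> E"
  shows "(norm (\<Sum>f\<in>F. c f *\<^sub>C f))\<^sup>2 = (\<Sum>f\<in>F. (cmod (c f))\<^sup>2)"
proof -
  have "cinner (\<Sum>f\<in>F. c f *\<^sub>C f) (\<Sum>f\<in>F. c f *\<^sub>C f)
      = (\<Sum>e\<in>F. cnj (c e) * cinner e (\<Sum>f\<in>F. c f *\<^sub>C f))"
    by (simp add: cinner_sum_left cinner_scaleC_left)
  also have "\<dots> = (\<Sum>e\<in>F. cnj (c e) * c e)"
    by (rule sum.cong) (use onb_cinner_sum[OF assms] in auto)
  also have "\<dots> = (\<Sum>e\<in>F. complex_of_real ((cmod (c e))\<^sup>2))"
    by (rule sum.cong) (auto simp: complex_norm_square[symmetric] mult.commute)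
  finally show ?thesis
    by (simp add: norm_sq_cinner)
qed

lemma bessel:
  assumes "is_onb E" "finite F" "F \<subseteq> E"
  shows "(\<Sum>e\<in>F. (cmod (cinner e x))\<^sup>2) \<le> (norm x)\<^sup>2"
proof -
  define s where "s = (\<Sum>f\<in>F. cinner f x *\<^sub>C f)"
  have 1: "cinner e (x - s) = 0" if "e \<in> F" for e
    using onb_cinner_sum[OF assms that, of "\<lambda>f. cinner f x"] by (simp add: s_def cinner_diff_right)
  have "cinner s (x - s) = (\<Sum>f\<in>F. cnj (cinner f x) * cinner f (x - s))"
    unfolding s_def by (simp add: cinner_sum_left cinner_scaleC_left)
  also have "\<dots> = 0" using 1 by simp
  finally have 2: "cinner s (x - s) = 0" .
  have "(norm x)\<^sup>2 = (norm (s + (x - s)))\<^sup>2" by simp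
  also have "\<dots> = (norm s)\<^sup>2 + (norm (x - s))\<^sup>2" by (simp only: norm_add_sq 2) simp
  finally have "(norm s)\<^sup>2 \<le> (norm x)\<^sup>2" by simp
  moreover have "(norm s)\<^sup>2 = (\<Sum>e\<in>F. (cmod (cinner e x))\<^sup>2)"
    unfolding s_def by (rule onb_norm_sum[OF assms])
  ultimately show ?thesis by simp
qed

lemma onb_sq_summable:
  assumes "is_onb E"
  shows "(\<lambda>e. (cmod (cinner e x))\<^sup>2) summable_on E"
  apply (rule nonneg_bdd_above_summable_on)
   apply simp
  apply (rule bdd_aboveI[where M="(norm x)\<^sup>2"])
  using bessel[OF assms] by auto

lemma sq_bound_summable:
  fixes f :: "'b \<Rightarrow> 'a::{real_normed_vector,complete_space}" and g :: "'b \<Rightarrow> real"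
  assumes gs: "g summable_on A"
    and bnd: "\<And>G. finite G \<Longrightarrow> G \<subseteq> A \<Longrightarrow> (norm (sum f G))\<^sup>2 \<le> sum g G"
  shows "f summable_on A"
proof -
  from gs obtain L where lim: "(sum g \<longlongrightarrow> L) (finite_subsets_at_top A)"
    unfolding summable_on_def has_sum_def by blast
  have "\<exists>P. eventually P (finite_subsets_at_top A) \<and>
              (\<forall>F F'. P F \<and> P F' \<longrightarrow> dist (sum f F) (sum f F') < e)" if "e > 0" for e
  proof -
    define d where "d = e\<^sup>2 / 16"
    define P where "P F \<longleftrightarrow> finite F \<and> F \<subseteq> A \<and> dist (sum g F) L < d" for F
    have "d > 0" using that by (simp add: d_def)
    have ev_P: "eventually P (finite_subsets_at_top A)"
      using lim
      by (auto simp add: P_def[abs_def] \<open>0 < d\<close> eventually_conj_iff eventually_finite_subsets_at_top_weakI tendsto_iff)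
    moreover have "dist (sum f F1) (sum f F2) < e" if "P F1" and "P F2" for F1 F2
    proof -
      from ev_P
      obtain F' where "finite F'" and "F' \<subseteq> A" and P_sup_F': "finite F \<and> F \<supseteq> F' \<and> F \<subseteq> A \<Longrightarrow> P F" for F
        by atomize_elim (simp add: eventually_finite_subsets_at_top)
      define F where "F = F' \<union> F1 \<union> F2"
      have "finite F" and "F \<subseteq> A"
        using F_def P_def[abs_def] that \<open>finite F'\<close> \<open>F' \<subseteq> A\<close> by auto
      have dist_F: "dist (sum g F) L < d"
        by (metis F_def \<open>F \<subseteq> A\<close> P_def P_sup_F' \<open>finite F\<close> le_supE order_refl)
      have dist_F_subset: "dist (sum f F) (sum f F'') < e/2" if F'': "F'' \<subseteq> F" "P F''" for F''
      proof -
        have fin: "finite F''" using F'' \<open>finite F\<close> finite_subset by blast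
        have dn: "dist (sum f F) (sum f F'') = norm (sum f (F-F''))"
          unfolding dist_norm using \<open>finite F\<close> F'' by (subst sum_diff) auto
        have "(norm (sum f (F-F'')))\<^sup>2 \<le> sum g (F - F'')"
          using bnd \<open>finite F\<close> \<open>F \<subseteq> A\<close> by auto
        moreover have "sum g (F - F'') = sum g F - sum g F''"
          using \<open>finite F\<close> F'' by (subst sum_diff) auto
        moreover have "sum g F - sum g F'' < e\<^sup>2 / 8"
          using dist_F F'' unfolding P_def dist_real_def d_def by linarith
        moreover have "(e/2)\<^sup>2 = e\<^sup>2 / 4" by (simp add: power_divide)
        moreover have "0 \<le> e\<^sup>2" by simp
        ultimately have "(norm (sum f (F-F'')))\<^sup>2 < (e/2)\<^sup>2"
          by linarith
        then have "(dist (sum f F) (sum f F''))\<^sup>2 < (e/2)\<^sup>2" by (simp only: dn)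
        then show ?thesis
          by (rule power_less_imp_less_base) (use \<open>e > 0\<close> in simp)
      qed
      have "dist (sum f F1) (sum f F2) \<le> dist (sum f F) (sum f F1) + dist (sum f F) (sum f F2)"
        by (rule dist_triangle3)
      also have "\<dots> < e/2 + e/2"
        by (intro add_strict_mono dist_F_subset that) (auto simp: F_def)
      finally show "dist (sum f F1) (sum f F2) < e" by simp
    qed
    ultimately show ?thesis by blast
  qed
  then have "cauchy_filter (filtermap (sum f) (finite_subsets_at_top A))"
    by (simp add: cauchy_filter_metric_filtermap)
  moreover have "complete (UNIV::'a set)"
    by (meson Cauchy_convergent UNIV_I complete_def convergent_def)
  ultimately obtain L' where "(sum f \<longlongrightarrow> L') (finite_subsets_at_top A)"
    using complete_uniform[where S=UNIV] by (force simp add: filterlim_def)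
  then show ?thesis
    using summable_on_def has_sum_def by blast
qed

lemma onb_series_summable:
  fixes E :: "'a::{complex_inner,complete_space} set"
  assumes "is_onb E" "(\<lambda>e. (cmod (c e))\<^sup>2) summable_on E"
  shows "(\<lambda>e. c e *\<^sub>C e) summable_on E"
  using assms(2) apply (rule sq_bound_summable)
  using onb_norm_sum[OF assms(1)] by simp

lemma parseval_vec:
  fixes E :: "'a::{complex_inner,complete_space} set"
  assumes E: "is_onb E"
  shows "((\<lambda>e. cinner e x *\<^sub>C e) has_sum x) E"
proof -
  have "(\<lambda>e. cinner e x *\<^sub>C e) summable_on E"
    using onb_series_summable[OF E onb_sq_summable[OF E]] .
  then obtain s where s: "((\<lambda>e. cinner e x *\<^sub>C e) has_sum s) E"
    unfolding summable_on_def by blast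
  have "cinner f (x - s) = 0" if f: "f \<in> E" for f
  proof -
    have "((\<lambda>e. cinner f (cinner e x *\<^sub>C e)) has_sum cinner f s) E"
      by (rule has_sum_bounded_linear[OF bounded_linear_cinner_right s])
    moreover have "((\<lambda>e. cinner f (cinner e x *\<^sub>C e)) has_sum cinner f x) E"
    proof -
      have "((\<lambda>e. cinner f (cinner e x *\<^sub>C e)) has_sum cinner f x) E \<longleftrightarrow>
            ((\<lambda>e. cinner f (cinner e x *\<^sub>C e)) has_sum cinner f x) {f}"
        apply (rule has_sum_cong_neutral)
        using f E unfolding is_onb_def by (auto simp: cinner_scaleC_right)
      moreover have "((\<lambda>e. cinner f (cinner e x *\<^sub>C e)) has_sum cinner f x) {f}"
        using f E unfolding is_onb_def by (auto simp: cinner_scaleC_right intro!: has_sum_finiteI)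
      ultimately show ?thesis by simp
    qed
    ultimately have "cinner f s = cinner f x" using has_sum_unique by blast
    then show ?thesis by (simp add: cinner_diff_right)
  qed
  then have "x - s = 0" using E unfolding is_onb_def by blast
  then show ?thesis using s by simp
qed

lemma parseval_scalar:
  fixes E :: "'a::{complex_inner,complete_space} set"
  assumes E: "is_onb E"
  shows "((\<lambda>e. cinner x e * cinner e y) has_sum cinner x y) E"
  using has_sum_bounded_linear[OF bounded_linear_cinner_right[of x] parseval_vec[OF E, of y]]
  by (simp add: cinner_scaleC_right mult.commute)

lemma parseval_norm:
  fixes E :: "'a::{complex_inner,complete_space} set"
  assumes E: "is_onb E"
  shows "((\<lambda>e. (cmod (cinner e x))\<^sup>2) has_sum (norm x)\<^sup>2) E"
proof -
  have "((\<lambda>e. Re (cinner x e * cinner e x)) has_sum Re (cinner x x)) E"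
    by (rule has_sum_Re[OF parseval_scalar[OF E]])
  moreover have "Re (cinner x e * cinner e x) = (cmod (cinner e x))\<^sup>2" for e
  proof -
    have "cinner x e * cinner e x = cnj (cinner e x) * cinner e x" by (simp add: cnj_cinner)
    also have "\<dots> = complex_of_real ((cmod (cinner e x))\<^sup>2)"
      by (metis complex_norm_square mult.commute)
    finally show ?thesis by simp
  qed
  ultimately show ?thesis by (simp add: norm_sq_cinner)
qed

definition is_adj :: "('a::complex_inner \<Rightarrow> 'a) \<Rightarrow> ('a \<Rightarrow> 'a) \<Rightarrow> bool" where
  "is_adj T S \<longleftrightarrow> (\<forall>x y. cinner (S x) y = cinner x (T y))"

lemma adjoint_is_adj: "is_adj T S \<Longrightarrow> is_adj T (adjoint T)"
  unfolding is_adj_def adjoint_def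
  by (rule someI[where P="\<lambda>S. \<forall>x y. cinner (S x) y = cinner x (T y)"])

lemma is_adj_unique:
  assumes "is_adj T S1" "is_adj T S2" shows "S1 = S2"
proof
  fix x
  have h: "cinner (S1 x - S2 x) y = 0" for y
    using assms unfolding is_adj_def by (simp add: cinner_diff_left)
  have "S1 x - S2 x = 0" using h[of "S1 x - S2 x"] cinner_eq_zero_iff by blast
  then show "S1 x = S2 x" by simp
qed

lemma adjoint_eq: "is_adj T S \<Longrightarrow> adjoint T = S"
  using adjoint_is_adj is_adj_unique by blast

lemma is_adj_sym: "is_adj T S \<Longrightarrow> is_adj S T"
  unfolding is_adj_def by (metis cinner_commute)

lemma is_adj_left: "is_adj T S \<Longrightarrow> cinner (S x) y = cinner x (T y)"
  unfolding is_adj_def by blast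

lemma is_adj_right: "is_adj T S \<Longrightarrow> cinner (T x) y = cinner x (S y)"
  using is_adj_sym is_adj_left by blast

lemma bounded_clinear_scaleC: "bounded_clinear T \<Longrightarrow> T (c *\<^sub>C x) = c *\<^sub>C T x"
  unfolding bounded_clinear_def by blast

lemma hs_adjoint_exists:
  fixes T :: "'a::{complex_inner,complete_space} \<Rightarrow> 'a"
  assumes "hilbert_schmidt T"
  shows "\<exists>S. is_adj T S"
proof -
  obtain E where E: "is_onb E" and sE: "(\<lambda>e. (norm (T e))\<^sup>2) summable_on E"
    using assms unfolding hilbert_schmidt_def by blast
  have bc: "bounded_clinear T" using assms unfolding hilbert_schmidt_def by blast
  have bl: "bounded_linear T" using bc by (rule bounded_clinear_linear)
  define S where "S x = infsum (\<lambda>e. cinner (T e) x *\<^sub>C e) E" for x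
  have hs: "((\<lambda>e. cinner (T e) x *\<^sub>C e) has_sum S x) E" for x
  proof -
    have "(\<lambda>e. (norm (T e))\<^sup>2 * (norm x)\<^sup>2) summable_on E"
      by (rule summable_on_cmult_left[OF sE])
    then have "(\<lambda>e. (cmod (cinner (T e) x))\<^sup>2) summable_on E"
    proof (rule summable_on_comparison_test)
      fix e
      have "(cmod (cinner (T e) x))\<^sup>2 \<le> (norm (T e) * norm x)\<^sup>2"
        by (rule power_mono[OF cauchy_schwarz]) simp
      then show "(cmod (cinner (T e) x))\<^sup>2 \<le> (norm (T e))\<^sup>2 * (norm x)\<^sup>2"
        by (simp add: power_mult_distrib)
    qed simp
    then have "(\<lambda>e. cinner (T e) x *\<^sub>C e) summable_on E"
      by (rule onb_series_summable[OF E])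
    then show ?thesis unfolding S_def by simp
  qed
  have "is_adj T S"
    unfolding is_adj_def
  proof (intro allI)
    fix x y
    have A: "((\<lambda>e. cinner y (cinner (T e) x *\<^sub>C e)) has_sum cinner y (S x)) E"
      by (rule has_sum_bounded_linear[OF bounded_linear_cinner_right hs])
    have A2: "((\<lambda>e. cnj (cinner y (cinner (T e) x *\<^sub>C e))) has_sum cnj (cinner y (S x))) E"
      using A by (simp only: has_sum_cnj_iff)
    have eqA: "cnj (cinner y (cinner (T e) x *\<^sub>C e)) = cinner e y * cinner x (T e)" for e
      by (simp add: cinner_scaleC_right cnj_cinner mult.commute)
    have blT: "bounded_linear (\<lambda>z. cinner x (T z))"
      by (rule bounded_linear_compose[OF bounded_linear_cinner_right bl])
    have eqB: "cinner x (T (cinner e y *\<^sub>C e)) = cinner e y * cinner x (T e)" for e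
      by (simp add: bounded_clinear_scaleC[OF bc] cinner_scaleC_right)
    have B: "((\<lambda>e. cinner x (T (cinner e y *\<^sub>C e))) has_sum cinner x (T y)) E"
      by (rule has_sum_bounded_linear[OF blT parseval_vec[OF E]])
    have B2: "((\<lambda>e. cinner e y * cinner x (T e)) has_sum cinner x (T y)) E"
      using B unfolding eqB .
    have A3: "((\<lambda>e. cinner e y * cinner x (T e)) has_sum cinner (S x) y) E"
      using A2 unfolding eqA by (simp only: cnj_cinner)
    show "cinner (S x) y = cinner x (T y)"
      using has_sum_unique[OF A3 B2] .
  qed
  then show ?thesis by blast
qed

lemma ab_le_sq: "0 \<le> a \<Longrightarrow> 0 \<le> b \<Longrightarrow> a * b \<le> a\<^sup>2 + (b::real)\<^sup>2"
proof -
  assume "0 \<le> a" "0 \<le> b"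
  then have "0 \<le> a * b" by simp
  moreover have "0 \<le> (a - b)\<^sup>2" by simp
  ultimately show ?thesis unfolding power2_diff by linarith
qed

lemma prod_sq_summable:
  fixes E F :: "'a::{complex_inner,complete_space} set"
  assumes E: "is_onb E" and F: "is_onb F" and sR: "(\<lambda>e. (norm (R e))\<^sup>2) summable_on E"
  shows "(\<lambda>(e,f). (cmod (cinner f (R e)))\<^sup>2) summable_on (E \<times> F)"
proof -
  define g where "g = (\<lambda>(e,f). (cmod (cinner f (R e)))\<^sup>2)"
  have inner: "((\<lambda>f. g (e,f)) has_sum (norm (R e))\<^sup>2) F" for e
    unfolding g_def using parseval_norm[OF F, of "R e"] by simp
  have "(\<lambda>x. norm (g x)) summable_on Sigma E (\<lambda>_. F)"
  proof (subst Infinite_Sum.abs_summable_on_Sigma_iff, intro conjI ballI)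
    fix e assume "e \<in> E"
    show "(\<lambda>f. norm (g (e, f))) summable_on F"
      using inner[of e] unfolding g_def by (auto simp: summable_on_def)
  next
    have "infsum (\<lambda>f. norm (g (e, f))) F = (norm (R e))\<^sup>2" for e
      using inner[of e] unfolding g_def by (auto intro: infsumI)
    then show "(\<lambda>e. norm (infsum (\<lambda>f. norm (g (e, f))) F)) summable_on E"
      using sR by simp
  qed
  then show ?thesis
    unfolding g_def[symmetric] using summable_on_iff_abs_summable_on_real by blast
qed

lemma trace_swap:
  fixes E F :: "'a::{complex_inner,complete_space} set"
  assumes E: "is_onb E" and F: "is_onb F" and aP: "is_adj P Ps" and aQ: "is_adj Q Qs"
    and sP: "(\<lambda>e. (norm (P e))\<^sup>2) summable_on E" and sQ: "(\<lambda>e. (norm (Q e))\<^sup>2) summable_on E"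
  shows "(\<lambda>e. cinner (P e) (Q e)) summable_on E"
    and "(\<lambda>f. cinner (Qs f) (Ps f)) summable_on F"
    and "infsum (\<lambda>e. cinner (P e) (Q e)) E = infsum (\<lambda>f. cinner (Qs f) (Ps f)) F"
proof -
  define h where "h e f = cinner (P e) f * cinner f (Q e)" for e f
  have gP: "(\<lambda>(e,f). (cmod (cinner f (P e)))\<^sup>2) summable_on (E \<times> F)"
    by (rule prod_sq_summable[OF E F sP])
  have gQ: "(\<lambda>(e,f). (cmod (cinner f (Q e)))\<^sup>2) summable_on (E \<times> F)"
    by (rule prod_sq_summable[OF E F sQ])
  have gPQ: "(\<lambda>(e,f). (cmod (cinner f (P e)))\<^sup>2 + (cmod (cinner f (Q e)))\<^sup>2) summable_on (E \<times> F)"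
    using summable_on_add[OF gP gQ] by (simp add: split_def)
  have "(\<lambda>x. norm ((\<lambda>(e,f). h e f) x)) summable_on (E \<times> F)"
  proof (rule Infinite_Sum.abs_summable_on_comparison_test)
    show "(\<lambda>x. norm ((\<lambda>(e,f). (cmod (cinner f (P e)))\<^sup>2 + (cmod (cinner f (Q e)))\<^sup>2) x)) summable_on (E \<times> F)"
      using gPQ summable_on_iff_abs_summable_on_real by blast
  next
    fix ef assume "ef \<in> E \<times> F"
    obtain e f where ef: "ef = (e,f)" by fastforce
    have "cmod (cinner (P e) f) = cmod (cinner f (P e))"
      by (metis cnj_cinner complex_mod_cnj)
    then have "norm (h e f) = cmod (cinner f (P e)) * cmod (cinner f (Q e))"
      unfolding h_def by (simp add: norm_mult)
    also have "\<dots> \<le> (cmod (cinner f (P e)))\<^sup>2 + (cmod (cinner f (Q e)))\<^sup>2"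
      by (rule ab_le_sq) simp_all
    finally show "norm ((\<lambda>(e,f). h e f) ef) \<le> norm ((\<lambda>(e,f). (cmod (cinner f (P e)))\<^sup>2 + (cmod (cinner f (Q e)))\<^sup>2) ef)"
      unfolding ef by simp
  qed
  then have hsum: "(\<lambda>(e,f). h e f) summable_on (E \<times> F)"
    by (rule abs_summable_summable)
  have hswap: "(\<lambda>(f,e). h e f) summable_on (F \<times> E)"
    by (metis (mono_tags, lifting) hsum case_swap inj_swap o_apply product_swap summable_on_cong summable_on_reindex)
  have ih1: "infsum (h e) F = cinner (P e) (Q e)" for e
    unfolding h_def by (rule infsumI[OF parseval_scalar[OF F]])
  have heq: "h e f = cinner (Qs f) e * cinner e (Ps f)" for e f
  proof -
    have "cinner (P e) f = cinner e (Ps f)"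
      using is_adj_right[OF aP] by simp
    moreover have "cinner f (Q e) = cinner (Qs f) e"
      using is_adj_left[OF aQ] by simp
    ultimately show ?thesis unfolding h_def by (simp add: mult.commute)
  qed
  have ih2: "infsum (\<lambda>e. h e f) E = cinner (Qs f) (Ps f)" for f
    unfolding heq by (rule infsumI[OF parseval_scalar[OF E]])
  show "(\<lambda>e. cinner (P e) (Q e)) summable_on E"
    using summable_on_Sigma_banach[OF hsum] unfolding ih1 .
  show "(\<lambda>f. cinner (Qs f) (Ps f)) summable_on F"
    using summable_on_Sigma_banach[of "\<lambda>f e. h e f", OF hswap] unfolding ih2 .
  show "infsum (\<lambda>e. cinner (P e) (Q e)) E = infsum (\<lambda>f. cinner (Qs f) (Ps f)) F"
    using infsum_swap_banach[OF hsum] unfolding ih1 ih2 .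
qed

lemma has_sum_diff':
  fixes f g :: "'b \<Rightarrow> 'c::{topological_ab_group_add}"
  assumes "(f has_sum a) A" "(g has_sum b) A"
  shows "((\<lambda>x. f x - g x) has_sum (a - b)) A"
proof -
  have "((\<lambda>x. - g x) has_sum (- b)) A" using assms(2) by (simp add: has_sum_uminus)
  from has_sum_add[OF assms(1) this] show ?thesis by simp
qed

lemma infsum_eq_has_sum:
  assumes "\<And>e. e \<in> A \<Longrightarrow> f e = g e" "(g has_sum s) A"
  shows "infsum f A = (s::'c::{topological_comm_monoid_add,t2_space})"
proof -
  have "infsum f A = infsum g A" by (rule infsum_cong) (use assms(1) in auto)
  also have "\<dots> = s" by (rule infsumI[OF assms(2)])
  finally show ?thesis .
qed

lemma cinner_sq_summable:
  assumes "(\<lambda>e. cinner (R e) (R e)) summable_on A"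
  shows "(\<lambda>e. (norm (R e::'a::complex_inner))\<^sup>2) summable_on A"
  using summable_on_Re[OF assms] by (simp add: cinner_self)

lemma has_sum_Re_nonneg:
  fixes R :: "'b \<Rightarrow> 'a::complex_inner"
  assumes "((\<lambda>e. cinner (R e) (R e)) has_sum s) A"
  shows "0 \<le> Re s"
proof -
  have "((\<lambda>e. (norm (R e))\<^sup>2) has_sum Re s) A"
    using has_sum_Re[OF assms] by (simp add: cinner_self)
  then show ?thesis by (rule has_sum_nonneg) simp
qed

lemma adj_comb:
  assumes aB: "is_adj B Bs" and aC: "is_adj C Cs"
  shows "is_adj (\<lambda>x. w *\<^sub>C (l1 *\<^sub>C B x + l2 *\<^sub>C C x))
                (\<lambda>x. cnj w *\<^sub>C (cnj l1 *\<^sub>C Bs x + cnj l2 *\<^sub>C Cs x))"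
  unfolding is_adj_def
  by (simp add: cinner_scaleC_left cinner_scaleC_right cinner_add_left cinner_add_right
      is_adj_left[OF aB] is_adj_left[OF aC])

lemma re_op_eq: "is_adj T Ts \<Longrightarrow> re_op T = (\<lambda>x. (1/2) *\<^sub>C (T x + Ts x))"
  unfolding re_op_def using adjoint_eq by metis

lemma re_adj:
  assumes "is_adj T Ts"
  shows "is_adj (\<lambda>x. (1/2) *\<^sub>C (T x + Ts x)) (\<lambda>x. (1/2) *\<^sub>C (T x + Ts x))"
  unfolding is_adj_def
  by (simp add: cinner_scaleC_left cinner_scaleC_right cinner_add_left cinner_add_right
      is_adj_left[OF assms] is_adj_right[OF assms])

lemma hs_norm_eq:
  assumes "is_adj T Ts"
  shows "hs_norm T = sqrt (Re (infsum (\<lambda>e. cinner (T e) (T e)) (SOME E. is_onb E)))"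
proof -
  have "cinner e (adjoint T (T e)) = cinner (T e) (T e)" for e
    using adjoint_eq[OF assms] is_adj_right[OF assms] by simp
  then show ?thesis unfolding hs_norm_def trace_def by simp
qed

lemma sq4_le: "((a::real) + b + c + d)\<^sup>2 \<le> 4 * (a\<^sup>2 + b\<^sup>2 + c\<^sup>2 + d\<^sup>2)"
proof -
  have "0 \<le> (a-b)\<^sup>2 + (a-c)\<^sup>2 + (a-d)\<^sup>2 + (b-c)\<^sup>2 + (b-d)\<^sup>2 + (c-d)\<^sup>2" by simp
  moreover have "4 * (a\<^sup>2 + b\<^sup>2 + c\<^sup>2 + d\<^sup>2) - (a + b + c + d)\<^sup>2
     = (a-b)\<^sup>2 + (a-c)\<^sup>2 + (a-d)\<^sup>2 + (b-c)\<^sup>2 + (b-d)\<^sup>2 + (c-d)\<^sup>2"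
    by (simp add: power2_eq_square algebra_simps)
  ultimately show ?thesis by linarith
qed

lemma norm_comb_le:
  assumes "cmod l1 \<le> 1" "cmod l2 \<le> 1"
  shows "norm (l1 *\<^sub>C p + l2 *\<^sub>C (q::'a::complex_inner)) \<le> norm p + norm q"
proof -
  have "norm (l1 *\<^sub>C p + l2 *\<^sub>C q) \<le> norm (l1 *\<^sub>C p) + norm (l2 *\<^sub>C q)"
    by (rule norm_triangle_ineq)
  also have "\<dots> = cmod l1 * norm p + cmod l2 * norm q" by (simp add: norm_scaleC)
  also have "\<dots> \<le> norm p + norm q"
    using assms by (intro add_mono mult_left_le_one_le) auto
  finally show ?thesis .
qed

lemma pt_bound:
  assumes w: "cmod w = 1" and l: "cmod l1 \<le> 1" "cmod l2 \<le> 1"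
  shows "(norm ((1/2) *\<^sub>C (w *\<^sub>C (l1 *\<^sub>C p + l2 *\<^sub>C q) + cnj w *\<^sub>C (cnj l1 *\<^sub>C u + cnj l2 *\<^sub>C v))))\<^sup>2
     \<le> (norm p)\<^sup>2 + (norm q)\<^sup>2 + (norm u)\<^sup>2 + (norm (v::'a::complex_inner))\<^sup>2"
proof -
  have l': "cmod (cnj l1) \<le> 1" "cmod (cnj l2) \<le> 1" using l by auto
  have "norm ((1/2) *\<^sub>C (w *\<^sub>C (l1 *\<^sub>C p + l2 *\<^sub>C q) + cnj w *\<^sub>C (cnj l1 *\<^sub>C u + cnj l2 *\<^sub>C v)))
     = (1/2) * norm (w *\<^sub>C (l1 *\<^sub>C p + l2 *\<^sub>C q) + cnj w *\<^sub>C (cnj l1 *\<^sub>C u + cnj l2 *\<^sub>C v))"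
    by (simp add: norm_scaleC)
  also have "\<dots> \<le> (1/2) * (norm (w *\<^sub>C (l1 *\<^sub>C p + l2 *\<^sub>C q)) + norm (cnj w *\<^sub>C (cnj l1 *\<^sub>C u + cnj l2 *\<^sub>C v)))"
    by (intro mult_left_mono norm_triangle_ineq) simp
  also have "\<dots> = (1/2) * (norm (l1 *\<^sub>C p + l2 *\<^sub>C q) + norm (cnj l1 *\<^sub>C u + cnj l2 *\<^sub>C v))"
    using w by (simp add: norm_scaleC)
  also have "\<dots> \<le> (1/2) * ((norm p + norm q) + (norm u + norm v))"
    by (intro mult_left_mono add_mono norm_comb_le l l') simp_all
  finally have h: "norm ((1/2) *\<^sub>C (w *\<^sub>C (l1 *\<^sub>C p + l2 *\<^sub>C q) + cnj w *\<^sub>C (cnj l1 *\<^sub>C u + cnj l2 *\<^sub>C v)))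
      \<le> (1/2) * (norm p + norm q + norm u + norm v)" by (simp add: add.assoc)
  have "(norm ((1/2) *\<^sub>C (w *\<^sub>C (l1 *\<^sub>C p + l2 *\<^sub>C q) + cnj w *\<^sub>C (cnj l1 *\<^sub>C u + cnj l2 *\<^sub>C v))))\<^sup>2
      \<le> ((1/2) * (norm p + norm q + norm u + norm v))\<^sup>2"
    by (rule power_mono[OF h]) simp
  also have "\<dots> = (1/4) * (norm p + norm q + norm u + norm v)\<^sup>2"
    by (simp add: power_mult_distrib power2_eq_square)
  also have "\<dots> \<le> (1/4) * (4 * ((norm p)\<^sup>2 + (norm q)\<^sup>2 + (norm u)\<^sup>2 + (norm v)\<^sup>2))"
    by (intro mult_left_mono sq4_le) simp
  finally show ?thesis by simp
qed

lemma omega_sq: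
  fixes a :: complex
  defines "w \<equiv> exp (\<i> * complex_of_real (- Arg a / 2))"
  shows "w * w * a = complex_of_real (cmod a)" and "cnj w * w = 1"
proof -
  have "w * w = exp (\<i> * complex_of_real (- Arg a / 2) + \<i> * complex_of_real (- Arg a / 2))"
    unfolding w_def by (rule exp_add[symmetric])
  also have "\<i> * complex_of_real (- Arg a / 2) + \<i> * complex_of_real (- Arg a / 2) = - (\<i> * complex_of_real (Arg a))"
  proof -
    have "complex_of_real (- Arg a / 2) = - complex_of_real (Arg a) / 2" by simp
    then show ?thesis by (simp add: algebra_simps)
  qed
  finally have ww: "w * w = exp (- (\<i> * complex_of_real (Arg a)))" .
  have "a = complex_of_real (cmod a) * exp (\<i> * complex_of_real (Arg a))"
    using rcis_cmod_Arg[of a] by (simp add: rcis_def cis_conv_exp)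
  then have "w * w * a = complex_of_real (cmod a) * (exp (- (\<i> * complex_of_real (Arg a))) * exp (\<i> * complex_of_real (Arg a)))"
    unfolding ww by (metis mult.assoc mult.commute)
  also have "exp (- (\<i> * complex_of_real (Arg a))) * exp (\<i> * complex_of_real (Arg a)) = 1"
    by (simp add: exp_minus)
  finally show "w * w * a = complex_of_real (cmod a)" by simp
  have "cmod w = 1" unfolding w_def by (rule norm_exp_i_times)
  then show "cnj w * w = 1"
    by (metis complex_norm_square mult.commute of_real_1 power_one)
qed

lemma S0_inner:
  assumes "cnj w * w = 1"
  shows "cinner ((1/2) *\<^sub>C (w *\<^sub>C p + cnj w *\<^sub>C u)) ((1/2) *\<^sub>C (w *\<^sub>C p + cnj w *\<^sub>C (u::'a::complex_inner)))
     = (1/4) * ((cinner p p + cinner u u) + (cnj w * cnj w * cinner p u + w * w * cinner u p))"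
proof -
  have "cinner ((1/2) *\<^sub>C (w *\<^sub>C p + cnj w *\<^sub>C u)) ((1/2) *\<^sub>C (w *\<^sub>C p + cnj w *\<^sub>C u))
     = (1/4) * ((cnj w * w) * cinner p p + (w * cnj w) * cinner u u + cnj w * cnj w * cinner p u + w * w * cinner u p)"
    by (simp add: cinner_scaleC_left cinner_scaleC_right cinner_add_left cinner_add_right algebra_simps)
  also have "w * cnj w = 1" using assms by (simp add: mult.commute)
  finally show ?thesis using assms by (simp add: algebra_simps)
qed

lemma Re_infsum_le:
  fixes R :: "'b \<Rightarrow> 'a::complex_inner"
  assumes le: "\<And>e. e \<in> A \<Longrightarrow> (norm (R e))\<^sup>2 \<le> g e" and gs: "g summable_on A"
  shows "Re (infsum (\<lambda>e. cinner (R e) (R e)) A) \<le> infsum g A"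
proof (cases "(\<lambda>e. cinner (R e) (R e)) summable_on A")
  case True
  have "Re (infsum (\<lambda>e. cinner (R e) (R e)) A) = infsum (\<lambda>e. Re (cinner (R e) (R e))) A"
    by (rule infsum_Re[OF True, symmetric])
  also have "\<dots> = infsum (\<lambda>e. (norm (R e))\<^sup>2) A" by (simp add: cinner_self)
  also have "\<dots> \<le> infsum g A"
    by (rule infsum_mono[OF cinner_sq_summable[OF True] gs le])
  finally show ?thesis .
next
  case False
  then have "infsum (\<lambda>e. cinner (R e) (R e)) A = 0" by (rule infsum_not_exists)
  moreover have "0 \<le> infsum g A"
    by (rule infsum_nonneg) (use le in \<open>meson order_trans zero_le_power2\<close>)
  ultimately show ?thesis by simp
qed

theorem corollary3p2:
  fixes B C :: "'a::{complex_inner, complete_space} \<Rightarrow> 'a"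
  assumes "hilbert_schmidt B" and "hilbert_schmidt C"
  shows "(w2e B C)\<^sup>2 \<ge>
     1/8 * cmod (trace (\<lambda>x. B (B x + C x) + C (B x + C x))
               + trace (\<lambda>x. B (B x - C x) - C (B x - C x))
               + 2 * trace (\<lambda>x. B (B x - C x) + C (B x - C x)))
     + 1/8 * ((hs_norm (\<lambda>x. B x + C x))\<^sup>2 + (hs_norm (\<lambda>x. B x - C x))\<^sup>2)
     + 1/4 * Re (trace (\<lambda>x. B (adjoint (\<lambda>y. B y - C y) x) + C (adjoint (\<lambda>y. B y - C y) x)))"
proof -
  obtain EB where EB: "is_onb EB" and sB0: "(\<lambda>e. (norm (B e))\<^sup>2) summable_on EB"
    using assms(1) unfolding hilbert_schmidt_def by blast
  obtain EC where EC: "is_onb EC" and sC0: "(\<lambda>e. (norm (C e))\<^sup>2) summable_on EC"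
    using assms(2) unfolding hilbert_schmidt_def by blast
  define E0 where "E0 = (SOME E::'a set. is_onb E)"
  have E0: "is_onb E0" unfolding E0_def using EB by (rule someI)
  have trE: "trace T = infsum (\<lambda>e. cinner e (T e)) E0" for T
    unfolding trace_def E0_def ..
  define Bs where "Bs = adjoint B"
  define Cs where "Cs = adjoint C"
  have aB: "is_adj B Bs" using hs_adjoint_exists[OF assms(1)] adjoint_is_adj unfolding Bs_def by blast
  have aC: "is_adj C Cs" using hs_adjoint_exists[OF assms(2)] adjoint_is_adj unfolding Cs_def by blast
  have aBs: "is_adj Bs B" by (rule is_adj_sym[OF aB])
  have aCs: "is_adj Cs C" by (rule is_adj_sym[OF aC])
  have nBs: "(\<lambda>e. (norm (Bs e))\<^sup>2) summable_on E0"
    using trace_swap(2)[OF EB E0 aB aB sB0 sB0] by (rule cinner_sq_summable)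
  have nB: "(\<lambda>e. (norm (B e))\<^sup>2) summable_on E0"
    using trace_swap(2)[OF E0 E0 aBs aBs nBs nBs] by (rule cinner_sq_summable)
  have nCs: "(\<lambda>e. (norm (Cs e))\<^sup>2) summable_on E0"
    using trace_swap(2)[OF EC E0 aC aC sC0 sC0] by (rule cinner_sq_summable)
  have nC: "(\<lambda>e. (norm (C e))\<^sup>2) summable_on E0"
    using trace_swap(2)[OF E0 E0 aCs aCs nCs nCs] by (rule cinner_sq_summable)
  have uupp: "infsum (\<lambda>e. cinner (Bs e) (Bs e)) E0 = infsum (\<lambda>e. cinner (B e) (B e)) E0"
    by (rule trace_swap(3)[OF E0 E0 aBs aBs nBs nBs])
  have vvqq: "infsum (\<lambda>e. cinner (Cs e) (Cs e)) E0 = infsum (\<lambda>e. cinner (C e) (C e)) E0"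
    by (rule trace_swap(3)[OF E0 E0 aCs aCs nCs nCs])
  have cyc: "infsum (\<lambda>e. cinner (Cs e) (B e)) E0 = infsum (\<lambda>e. cinner (Bs e) (C e)) E0"
    by (rule trace_swap(3)[OF E0 E0 aCs aB nCs nB])
  have SM: "\<And>P Ps Q Qs. is_adj P Ps \<Longrightarrow> is_adj Q Qs \<Longrightarrow> (\<lambda>e. (norm (P e))\<^sup>2) summable_on E0 \<Longrightarrow>
      (\<lambda>e. (norm (Q e))\<^sup>2) summable_on E0 \<Longrightarrow> ((\<lambda>e. cinner (P e) (Q e)) has_sum infsum (\<lambda>e. cinner (P e) (Q e)) E0) E0"
    using trace_swap(1)[OF E0 E0] by (simp add: has_sum_infsum)
  define up where "up = infsum (\<lambda>e. cinner (Bs e) (B e)) E0"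
  define uq where "uq = infsum (\<lambda>e. cinner (Bs e) (C e)) E0"
  define vp where "vp = infsum (\<lambda>e. cinner (Cs e) (B e)) E0"
  define vq where "vq = infsum (\<lambda>e. cinner (Cs e) (C e)) E0"
  define pp where "pp = infsum (\<lambda>e. cinner (B e) (B e)) E0"
  define pq where "pq = infsum (\<lambda>e. cinner (B e) (C e)) E0"
  define qp where "qp = infsum (\<lambda>e. cinner (C e) (B e)) E0"
  define qq where "qq = infsum (\<lambda>e. cinner (C e) (C e)) E0"
  define uu where "uu = infsum (\<lambda>e. cinner (Bs e) (Bs e)) E0"
  define uv where "uv = infsum (\<lambda>e. cinner (Bs e) (Cs e)) E0"
  define vu where "vu = infsum (\<lambda>e. cinner (Cs e) (Bs e)) E0"
  define vv where "vv = infsum (\<lambda>e. cinner (Cs e) (Cs e)) E0"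
  define pu where "pu = infsum (\<lambda>e. cinner (B e) (Bs e)) E0"
  have h_up: "((\<lambda>e. cinner (Bs e) (B e)) has_sum up) E0" unfolding up_def by (rule SM[OF aBs aB nBs nB])
  have h_uq: "((\<lambda>e. cinner (Bs e) (C e)) has_sum uq) E0" unfolding uq_def by (rule SM[OF aBs aC nBs nC])
  have h_vp: "((\<lambda>e. cinner (Cs e) (B e)) has_sum vp) E0" unfolding vp_def by (rule SM[OF aCs aB nCs nB])
  have h_vq: "((\<lambda>e. cinner (Cs e) (C e)) has_sum vq) E0" unfolding vq_def by (rule SM[OF aCs aC nCs nC])
  have h_pp: "((\<lambda>e. cinner (B e) (B e)) has_sum pp) E0" unfolding pp_def by (rule SM[OF aB aB nB nB])
  have h_pq: "((\<lambda>e. cinner (B e) (C e)) has_sum pq) E0" unfolding pq_def by (rule SM[OF aB aC nB nC])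
  have h_qp: "((\<lambda>e. cinner (C e) (B e)) has_sum qp) E0" unfolding qp_def by (rule SM[OF aC aB nC nB])
  have h_qq: "((\<lambda>e. cinner (C e) (C e)) has_sum qq) E0" unfolding qq_def by (rule SM[OF aC aC nC nC])
  have h_uu: "((\<lambda>e. cinner (Bs e) (Bs e)) has_sum uu) E0" unfolding uu_def by (rule SM[OF aBs aBs nBs nBs])
  have h_uv: "((\<lambda>e. cinner (Bs e) (Cs e)) has_sum uv) E0" unfolding uv_def by (rule SM[OF aBs aCs nBs nCs])
  have h_vu: "((\<lambda>e. cinner (Cs e) (Bs e)) has_sum vu) E0" unfolding vu_def by (rule SM[OF aCs aBs nCs nBs])
  have h_vv: "((\<lambda>e. cinner (Cs e) (Cs e)) has_sum vv) E0" unfolding vv_def by (rule SM[OF aCs aCs nCs nCs])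
  have h_pu: "((\<lambda>e. cinner (B e) (Bs e)) has_sum pu) E0" unfolding pu_def by (rule SM[OF aB aBs nB nBs])
  have uu_pp: "uu = pp" unfolding uu_def pp_def by (rule uupp)
  have vv_qq: "vv = qq" unfolding vv_def qq_def by (rule vvqq)
  have vp_uq: "vp = uq" unfolding vp_def uq_def by (rule cyc)
  have "vu = infsum (\<lambda>e. cnj (cinner (Bs e) (Cs e))) E0" unfolding vu_def by (simp only: cnj_cinner)
  then have vu_uv: "vu = cnj uv" unfolding uv_def by (simp only: infsum_cnj)
  have "pu = infsum (\<lambda>e. cnj (cinner (Bs e) (B e))) E0" unfolding pu_def by (simp only: cnj_cinner)
  then have pu_up: "pu = cnj up" unfolding up_def by (simp only: infsum_cnj)
  have adjB: "\<And>e z. cinner e (B z) = cinner (Bs e) z" using is_adj_left[OF aB] by simp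
  have adjC: "\<And>e z. cinner e (C z) = cinner (Cs e) z" using is_adj_left[OF aC] by simp

  have T1: "trace (\<lambda>x. B (B x + C x) + C (B x + C x)) = ((up + uq) + (vp + vq))"
    unfolding trE
  proof (rule infsum_eq_has_sum)
    fix e
    show "cinner e (B (B e + C e) + C (B e + C e)) =
      (cinner (Bs e) (B e) + cinner (Bs e) (C e)) + (cinner (Cs e) (B e) + cinner (Cs e) (C e))"
      by (simp add: cinner_add_right adjB adjC)
  next
    show "((\<lambda>e. (cinner (Bs e) (B e) + cinner (Bs e) (C e)) + (cinner (Cs e) (B e) + cinner (Cs e) (C e)))
      has_sum ((up + uq) + (vp + vq))) E0"
      by (intro has_sum_add h_up h_uq h_vp h_vq)
  qed
  have T2: "trace (\<lambda>x. B (B x - C x) - C (B x - C x)) = ((up - uq) - (vp - vq))"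
    unfolding trE
  proof (rule infsum_eq_has_sum)
    fix e
    show "cinner e (B (B e - C e) - C (B e - C e)) =
      (cinner (Bs e) (B e) - cinner (Bs e) (C e)) - (cinner (Cs e) (B e) - cinner (Cs e) (C e))"
      by (simp add: cinner_diff_right adjB adjC)
  next
    show "((\<lambda>e. (cinner (Bs e) (B e) - cinner (Bs e) (C e)) - (cinner (Cs e) (B e) - cinner (Cs e) (C e)))
      has_sum ((up - uq) - (vp - vq))) E0"
      by (intro has_sum_diff' h_up h_uq h_vp h_vq)
  qed
  have T3: "trace (\<lambda>x. B (B x - C x) + C (B x - C x)) = ((up - uq) + (vp - vq))"
    unfolding trE
  proof (rule infsum_eq_has_sum)
    fix e
    show "cinner e (B (B e - C e) + C (B e - C e)) =
      (cinner (Bs e) (B e) - cinner (Bs e) (C e)) + (cinner (Cs e) (B e) - cinner (Cs e) (C e))"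
      by (simp add: cinner_add_right cinner_diff_right adjB adjC)
  next
    show "((\<lambda>e. (cinner (Bs e) (B e) - cinner (Bs e) (C e)) + (cinner (Cs e) (B e) - cinner (Cs e) (C e)))
      has_sum ((up - uq) + (vp - vq))) E0"
      by (intro has_sum_add has_sum_diff' h_up h_uq h_vp h_vq)
  qed
  have aX: "is_adj (\<lambda>x. B x + C x) (\<lambda>x. Bs x + Cs x)"
    unfolding is_adj_def by (simp add: cinner_add_left cinner_add_right is_adj_left[OF aB] is_adj_left[OF aC])
  have aY: "is_adj (\<lambda>x. B x - C x) (\<lambda>x. Bs x - Cs x)"
    unfolding is_adj_def by (simp add: cinner_diff_left cinner_diff_right is_adj_left[OF aB] is_adj_left[OF aC])
  have hX: "((\<lambda>e. cinner (B e + C e) (B e + C e)) has_sum ((pp + pq) + (qp + qq))) E0"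
  proof -
    have "((\<lambda>e. (cinner (B e) (B e) + cinner (B e) (C e)) + (cinner (C e) (B e) + cinner (C e) (C e)))
      has_sum ((pp + pq) + (qp + qq))) E0"
      by (intro has_sum_add h_pp h_pq h_qp h_qq)
    moreover have "cinner (B e + C e) (B e + C e) = (cinner (B e) (B e) + cinner (B e) (C e)) + (cinner (C e) (B e) + cinner (C e) (C e))" for e
      by (simp add: cinner_add_left cinner_add_right add_ac)
    ultimately show ?thesis by simp
  qed
  have hY: "((\<lambda>e. cinner (B e - C e) (B e - C e)) has_sum ((pp - pq) - (qp - qq))) E0"
  proof -
    have "((\<lambda>e. (cinner (B e) (B e) - cinner (B e) (C e)) - (cinner (C e) (B e) - cinner (C e) (C e)))
      has_sum ((pp - pq) - (qp - qq))) E0"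
      by (intro has_sum_diff' h_pp h_pq h_qp h_qq)
    moreover have "cinner (B e - C e) (B e - C e) = (cinner (B e) (B e) - cinner (B e) (C e)) - (cinner (C e) (B e) - cinner (C e) (C e))" for e
      by (simp add: cinner_diff_left cinner_diff_right algebra_simps)
    ultimately show ?thesis by simp
  qed
  have HX: "(hs_norm (\<lambda>x. B x + C x))\<^sup>2 = Re ((pp + pq) + (qp + qq))"
  proof -
    have "hs_norm (\<lambda>x. B x + C x) = sqrt (Re ((pp + pq) + (qp + qq)))"
      unfolding hs_norm_eq[OF aX] E0_def[symmetric] using infsumI[OF hX] by simp
    then show ?thesis using has_sum_Re_nonneg[OF hX] by simp
  qed
  have HY: "(hs_norm (\<lambda>x. B x - C x))\<^sup>2 = Re ((pp - pq) - (qp - qq))"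
  proof -
    have "hs_norm (\<lambda>x. B x - C x) = sqrt (Re ((pp - pq) - (qp - qq)))"
      unfolding hs_norm_eq[OF aY] E0_def[symmetric] using infsumI[OF hY] by simp
    then show ?thesis using has_sum_Re_nonneg[OF hY] by simp
  qed
  have T4: "trace (\<lambda>x. B (adjoint (\<lambda>y. B y - C y) x) + C (adjoint (\<lambda>y. B y - C y) x))
      = ((uu - uv) + (vu - vv))"
    unfolding trE adjoint_eq[OF aY]
  proof (rule infsum_eq_has_sum)
    fix e
    show "cinner e (B (Bs e - Cs e) + C (Bs e - Cs e)) =
      (cinner (Bs e) (Bs e) - cinner (Bs e) (Cs e)) + (cinner (Cs e) (Bs e) - cinner (Cs e) (Cs e))"
      by (simp add: cinner_add_right cinner_diff_right adjB adjC)
  next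
    show "((\<lambda>e. (cinner (Bs e) (Bs e) - cinner (Bs e) (Cs e)) + (cinner (Cs e) (Bs e) - cinner (Cs e) (Cs e)))
      has_sum ((uu - uv) + (vu - vv))) E0"
      by (intro has_sum_add has_sum_diff' h_uu h_uv h_vu h_vv)
  qed
  have RHS: "1/8 * cmod (trace (\<lambda>x. B (B x + C x) + C (B x + C x))
               + trace (\<lambda>x. B (B x - C x) - C (B x - C x))
               + 2 * trace (\<lambda>x. B (B x - C x) + C (B x - C x)))
     + 1/8 * ((hs_norm (\<lambda>x. B x + C x))\<^sup>2 + (hs_norm (\<lambda>x. B x - C x))\<^sup>2)
     + 1/4 * Re (trace (\<lambda>x. B (adjoint (\<lambda>y. B y - C y) x) + C (adjoint (\<lambda>y. B y - C y) x)))
     = 1/2 * cmod up + 1/2 * Re pp"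
  proof -
    have "((up + uq) + (vp + vq)) + ((up - uq) - (vp - vq)) + 2 * ((up - uq) + (vp - vq)) = 4 * up"
      using vp_uq by (simp add: algebra_simps)
    then have c1: "cmod (((up + uq) + (vp + vq)) + ((up - uq) - (vp - vq)) + 2 * ((up - uq) + (vp - vq))) = 4 * cmod up"
      by (simp add: norm_mult)
    have c2: "Re ((uu - uv) + (vu - vv)) = Re pp - Re qq"
      using uu_pp vv_qq vu_uv by simp
    have c3: "Re ((pp + pq) + (qp + qq)) + Re ((pp - pq) - (qp - qq)) = 2 * Re pp + 2 * Re qq"
      by simp
    show ?thesis
      unfolding T1 T2 T3 T4 HX HY c1 c2 c3 by (simp add: field_simps)
  qed
  define \<theta>0 where "\<theta>0 = - Arg up / 2"
  define w where "w = exp (\<i> * complex_of_real \<theta>0)"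
  have ww: "w * w * up = complex_of_real (cmod up)" and cw: "cnj w * w = 1"
    using omega_sq[of up] unfolding w_def \<theta>0_def by simp_all
  define T0 where "T0 = (\<lambda>x. w *\<^sub>C (1 *\<^sub>C B x + 0 *\<^sub>C C x))"
  define Ts0 where "Ts0 = (\<lambda>x. cnj w *\<^sub>C (cnj 1 *\<^sub>C Bs x + cnj 0 *\<^sub>C Cs x))"
  have aT0: "is_adj T0 Ts0" unfolding T0_def Ts0_def by (rule adj_comb[OF aB aC])
  define S0 where "S0 = (\<lambda>x. (1/2) *\<^sub>C (T0 x + Ts0 x))"
  have reS0: "re_op T0 = S0" unfolding S0_def by (rule re_op_eq[OF aT0])
  have aS0: "is_adj S0 S0" unfolding S0_def by (rule re_adj[OF aT0])
  have S0e: "S0 e = (1/2) *\<^sub>C (w *\<^sub>C B e + cnj w *\<^sub>C Bs e)" for e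
    unfolding S0_def T0_def Ts0_def by (simp add: scaleC_one)
  have hS: "((\<lambda>e. cinner (S0 e) (S0 e)) has_sum ((1/4) * ((pp + uu) + (cnj w * cnj w * pu + w * w * up)))) E0"
  proof -
    have "((\<lambda>e. (1/4) * ((cinner (B e) (B e) + cinner (Bs e) (Bs e)) + (cnj w * cnj w * cinner (B e) (Bs e) + w * w * cinner (Bs e) (B e))))
       has_sum ((1/4) * ((pp + uu) + (cnj w * cnj w * pu + w * w * up)))) E0"
      by (intro has_sum_cmult_right has_sum_add h_pp h_uu h_pu h_up)
    then show ?thesis by (simp only: S0e S0_inner[OF cw])
  qed
  have ReS: "Re ((1/4) * ((pp + uu) + (cnj w * cnj w * pu + w * w * up))) = 1/2 * cmod up + 1/2 * Re pp"
  proof -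
    have "cnj w * cnj w * pu = cnj (w * w * up)" using pu_up by simp
    also have "\<dots> = complex_of_real (cmod up)" using ww by simp
    finally have "cnj w * cnj w * pu = complex_of_real (cmod up)" .
    then show ?thesis using ww uu_pp by simp
  qed
  have nn: "0 \<le> 1/2 * cmod up + 1/2 * Re pp"
    using has_sum_Re_nonneg[OF hS] unfolding ReS .
  have HS: "hs_norm (re_op T0) = sqrt (1/2 * cmod up + 1/2 * Re pp)"
    unfolding reS0 hs_norm_eq[OF aS0] E0_def[symmetric] infsumI[OF hS] ReS ..
  define Xset where "Xset = {hs_norm (re_op (\<lambda>x. exp (\<i> * complex_of_real \<theta>) *\<^sub>C (l1 *\<^sub>C B x + l2 *\<^sub>C C x)))
                  | l1 l2 \<theta>. (cmod l1)\<^sup>2 + (cmod l2)\<^sup>2 \<le> 1}"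
  have mem: "hs_norm (re_op T0) \<in> Xset"
    unfolding Xset_def T0_def w_def
    by (rule CollectI, intro exI[of _ "1::complex"] exI[of _ "0::complex"] exI[of _ \<theta>0]) simp
  define g where "g = (\<lambda>e. (norm (B e))\<^sup>2 + (norm (C e))\<^sup>2 + (norm (Bs e))\<^sup>2 + (norm (Cs e))\<^sup>2)"
  have gs: "g summable_on E0"
    unfolding g_def by (intro summable_on_add nB nC nBs nCs)
  have bdd: "bdd_above Xset"
  proof (rule bdd_aboveI[where M="sqrt (infsum g E0)"])
    fix z assume "z \<in> Xset"
    then obtain l1 l2 \<theta> where z: "z = hs_norm (re_op (\<lambda>x. exp (\<i> * complex_of_real \<theta>) *\<^sub>C (l1 *\<^sub>C B x + l2 *\<^sub>C C x)))"
      and lc: "(cmod l1)\<^sup>2 + (cmod l2)\<^sup>2 \<le> 1"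
      unfolding Xset_def by blast
    define w' where "w' = exp (\<i> * complex_of_real \<theta>)"
    have cw': "cmod w' = 1" unfolding w'_def by (rule norm_exp_i_times)
    have p1: "0 \<le> (cmod l1)\<^sup>2" "0 \<le> (cmod l2)\<^sup>2" by simp_all
    have "(cmod l1)\<^sup>2 \<le> 1" using lc p1(2) by linarith
    then have "(cmod l1)\<^sup>2 \<le> 1\<^sup>2" by simp
    then have l1: "cmod l1 \<le> 1" by (rule power2_le_imp_le) simp
    have "(cmod l2)\<^sup>2 \<le> 1" using lc p1(1) by linarith
    then have "(cmod l2)\<^sup>2 \<le> 1\<^sup>2" by simp
    then have l2: "cmod l2 \<le> 1" by (rule power2_le_imp_le) simp
    define T' where "T' = (\<lambda>x. w' *\<^sub>C (l1 *\<^sub>C B x + l2 *\<^sub>C C x))"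
    define Ts' where "Ts' = (\<lambda>x. cnj w' *\<^sub>C (cnj l1 *\<^sub>C Bs x + cnj l2 *\<^sub>C Cs x))"
    have aT': "is_adj T' Ts'" unfolding T'_def Ts'_def by (rule adj_comb[OF aB aC])
    define S' where "S' = (\<lambda>x. (1/2) *\<^sub>C (T' x + Ts' x))"
    have reS': "re_op T' = S'" unfolding S'_def by (rule re_op_eq[OF aT'])
    have aS': "is_adj S' S'" unfolding S'_def by (rule re_adj[OF aT'])
    have le: "(norm (S' e))\<^sup>2 \<le> g e" for e
      unfolding S'_def T'_def Ts'_def g_def by (rule pt_bound[OF cw' l1 l2])
    have "z = sqrt (Re (infsum (\<lambda>e. cinner (S' e) (S' e)) E0))"
      unfolding z w'_def[symmetric] T'_def[symmetric] reS' hs_norm_eq[OF aS'] E0_def ..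
    also have "\<dots> \<le> sqrt (infsum g E0)"
      by (rule real_sqrt_le_mono[OF Re_infsum_le[OF le gs]])
    finally show "z \<le> sqrt (infsum g E0)" .
  qed
  have "hs_norm (re_op T0) \<le> w2e B C"
    unfolding w2e_def Xset_def[symmetric] by (rule cSup_upper[OF mem bdd])
  moreover have "0 \<le> hs_norm (re_op T0)" unfolding HS by (rule real_sqrt_ge_zero[OF nn])
  ultimately have "(hs_norm (re_op T0))\<^sup>2 \<le> (w2e B C)\<^sup>2" by (rule power_mono)
  moreover have "(hs_norm (re_op T0))\<^sup>2 = 1/2 * cmod up + 1/2 * Re pp"
    unfolding HS by (rule real_sqrt_pow2[OF nn])
  ultimately show ?thesis unfolding RHS by simp
qed

end
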